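(* Let $B$ be a unital $C^*$-algebra, $A\subseteq B$ a norm-closed subalgebra containing the unit of $B$, and $q\in B^{**}$ a projection. The following are equivalent: (1) $q$ lies in the weak* closure of $A$ in $B^{**}$; (2) $q\in A^{\perp\perp}$; (3) $A^{\perp}\subseteq (qA)_{\perp}$; (3') $A^{\perp}\subseteq (Aq)_{\perp}$; (4) $A^{\perp}\subseteq (qAq)_{\perp}$; (5) for every $\mu\in A^{\perp}$, $\mu q\in A^{\perp}$; (5') for every $\mu\in A^\perp$, $q\mu\in A^\perp$; (6) for every $\mu\in A^{\perp}$, $q\mu q\in A^{\perp}$.
   Context: $A^{\perp}\subseteq B^*$ is the annihilator of $A$ and $A^{\perp\perp}\subseteq B^{**}$. For a subset $S\subseteq B^{**}$, $S_{\perp}=\{\varphi\in B^*:\varphi(s)=0\ \forall s\in S\}$, where each $\varphi\in B^*$ is regarded as a weak* continuous functional on $B^{**}$. For $\mu\in B^*$ and $q\in B^{**}$, $\mu q, q\mu, q\mu q\in B^*$ are defined by $(\mu q)(x)=\mu(qx)$, $(q\mu)(x)=\mu(xq)$, $(q\mu q)(x)=\mu(qxq)$ for $x\in B$. *)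

theory Defs
  imports "HOL-Analysis.Analysis"
begin

text \<open>A unital C*-algebra is modelled on a type 'b of class real_normed_algebra_1 and banach
 (complete, associative, unital, norm 1 = 1), together with a complex scalar multiplication sc
 extending the real one and an involution st, satisfying the C*-axioms.\<close>

definition cstar_algebra :: "(complex \<Rightarrow> 'b::real_normed_algebra_1 \<Rightarrow> 'b) \<Rightarrow> ('b \<Rightarrow> 'b) \<Rightarrow> bool" where
  "cstar_algebra sc st \<longleftrightarrow>
    (\<forall>r x. sc (complex_of_real r) x = scaleR r x) \<and>
    (\<forall>a b x. sc (a * b) x = sc a (sc b x)) \<and>
    (\<forall>a x y. sc a (x + y) = sc a x + sc a y) \<and>
    (\<forall>a b x. sc (a + b) x = sc a x + sc b x) \<and>
    (\<forall>a x y. sc a (x * y) = sc a x * y \<and> sc a (x * y) = x * sc a y) \<and>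
    (\<forall>a x. norm (sc a x) = cmod a * norm x) \<and>
    (\<forall>x y. st (x + y) = st x + st y) \<and>
    (\<forall>a x. st (sc a x) = sc (cnj a) (st x)) \<and>
    (\<forall>x y. st (x * y) = st y * st x) \<and>
    (\<forall>x. st (st x) = x) \<and>
    (\<forall>x. norm (st x * x) = (norm x)\<^sup>2)"

definition unital_closed_subalgebra :: "(complex \<Rightarrow> 'b \<Rightarrow> 'b) \<Rightarrow> 'b::real_normed_algebra_1 set \<Rightarrow> bool" where
  "unital_closed_subalgebra sc A \<longleftrightarrow>
    closed A \<and> 1 \<in> A \<and>
    (\<forall>x\<in>A. \<forall>y\<in>A. x + y \<in> A \<and> x * y \<in> A) \<and>
    (\<forall>a. \<forall>x\<in>A. sc a x \<in> A)"

definition dual :: "(complex \<Rightarrow> 'b \<Rightarrow> 'b) \<Rightarrow> ('b::real_normed_vector \<Rightarrow> complex) set" where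
  "dual sc = {\<phi>. (\<forall>x y. \<phi> (x + y) = \<phi> x + \<phi> y) \<and> (\<forall>a x. \<phi> (sc a x) = a * \<phi> x) \<and>
                 (\<exists>K. \<forall>x. cmod (\<phi> x) \<le> K * norm x)}"

definition dnorm :: "('b::real_normed_vector \<Rightarrow> complex) \<Rightarrow> real" where
  "dnorm \<phi> = (SUP x\<in>{x. norm x \<le> 1}. cmod (\<phi> x))"

text \<open>The bidual B**: bounded complex-linear functionals on B*, normalised to be 0 off B*.\<close>
definition bidual :: "(complex \<Rightarrow> 'b \<Rightarrow> 'b) \<Rightarrow> (('b::real_normed_vector \<Rightarrow> complex) \<Rightarrow> complex) set" where
  "bidual sc = {m. (\<forall>\<phi>\<in>dual sc. \<forall>\<psi>\<in>dual sc. m (\<lambda>x. \<phi> x + \<psi> x) = m \<phi> + m \<psi>) \<and>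
                   (\<forall>a. \<forall>\<phi>\<in>dual sc. m (\<lambda>x. a * \<phi> x) = a * m \<phi>) \<and>
                   (\<exists>K. \<forall>\<phi>\<in>dual sc. cmod (m \<phi>) \<le> K * dnorm \<phi>) \<and>
                   (\<forall>\<phi>. \<phi> \<notin> dual sc \<longrightarrow> m \<phi> = 0)}"

definition emb :: "(complex \<Rightarrow> 'b \<Rightarrow> 'b) \<Rightarrow> 'b::real_normed_vector \<Rightarrow> (('b \<Rightarrow> complex) \<Rightarrow> complex)" where
  "emb sc x = (\<lambda>\<phi>. if \<phi> \<in> dual sc then \<phi> x else 0)"

text \<open>(First) Arens product on B**:  (m n)(phi) = m(n.phi), (n.phi)(a) = n(phi.a), (phi.a)(b) = phi(a b).\<close>
definition arens :: "(complex \<Rightarrow> 'b \<Rightarrow> 'b) \<Rightarrow> (('b::real_normed_algebra \<Rightarrow> complex) \<Rightarrow> complex)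
    \<Rightarrow> (('b \<Rightarrow> complex) \<Rightarrow> complex) \<Rightarrow> (('b \<Rightarrow> complex) \<Rightarrow> complex)" where
  "arens sc m n = (\<lambda>\<phi>. if \<phi> \<in> dual sc then m (\<lambda>a. n (\<lambda>b. \<phi> (a * b))) else 0)"

definition bidual_star :: "(complex \<Rightarrow> 'b \<Rightarrow> 'b) \<Rightarrow> ('b \<Rightarrow> 'b) \<Rightarrow> (('b::real_normed_vector \<Rightarrow> complex) \<Rightarrow> complex)
    \<Rightarrow> (('b \<Rightarrow> complex) \<Rightarrow> complex)" where
  "bidual_star sc st m = (\<lambda>\<phi>. if \<phi> \<in> dual sc then cnj (m (\<lambda>x. cnj (\<phi> (st x)))) else 0)"

definition bidual_projection :: "(complex \<Rightarrow> 'b \<Rightarrow> 'b) \<Rightarrow> ('b \<Rightarrow> 'b) \<Rightarrow> (('b::real_normed_algebra \<Rightarrow> complex) \<Rightarrow> complex) \<Rightarrow> bool" where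
  "bidual_projection sc st q \<longleftrightarrow> q \<in> bidual sc \<and> arens sc q q = q \<and> bidual_star sc st q = q"

text \<open>Closure in B** for the weak* topology sigma(B**, B*) (pointwise convergence on B*),
 written via basic neighbourhoods.\<close>
definition weak_star_closure :: "(complex \<Rightarrow> 'b \<Rightarrow> 'b) \<Rightarrow> (('b::real_normed_vector \<Rightarrow> complex) \<Rightarrow> complex) set
    \<Rightarrow> (('b \<Rightarrow> complex) \<Rightarrow> complex) set" where
  "weak_star_closure sc S = {m \<in> bidual sc. \<forall>F \<epsilon>. finite F \<and> F \<subseteq> dual sc \<and> \<epsilon> > 0 \<longrightarrow>
       (\<exists>s\<in>S. \<forall>\<phi>\<in>F. cmod (m \<phi> - s \<phi>) < \<epsilon>)}"

definition annihilator :: "(complex \<Rightarrow> 'b \<Rightarrow> 'b) \<Rightarrow> 'b::real_normed_vector set \<Rightarrow> ('b \<Rightarrow> complex) set" where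
  "annihilator sc A = {\<phi> \<in> dual sc. \<forall>a\<in>A. \<phi> a = 0}"

definition biannihilator :: "(complex \<Rightarrow> 'b \<Rightarrow> 'b) \<Rightarrow> 'b::real_normed_vector set \<Rightarrow> (('b \<Rightarrow> complex) \<Rightarrow> complex) set" where
  "biannihilator sc A = {m \<in> bidual sc. \<forall>\<phi>\<in>annihilator sc A. m \<phi> = 0}"

definition preannihilator :: "(complex \<Rightarrow> 'b \<Rightarrow> 'b) \<Rightarrow> (('b::real_normed_vector \<Rightarrow> complex) \<Rightarrow> complex) set \<Rightarrow> ('b \<Rightarrow> complex) set" where
  "preannihilator sc S = {\<phi> \<in> dual sc. \<forall>s\<in>S. s \<phi> = 0}"

text \<open>Module actions: (mu q)(x) = mu(q x), (q mu)(x) = mu(x q), (q mu q)(x) = mu(q x q),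
 where mu is viewed as the weak* continuous functional s \<mapsto> s mu on B**.\<close>
definition fun_right :: "(complex \<Rightarrow> 'b \<Rightarrow> 'b) \<Rightarrow> ('b::real_normed_algebra \<Rightarrow> complex) \<Rightarrow> (('b \<Rightarrow> complex) \<Rightarrow> complex) \<Rightarrow> ('b \<Rightarrow> complex)" where
  "fun_right sc \<mu> q = (\<lambda>x. arens sc q (emb sc x) \<mu>)"

definition fun_left :: "(complex \<Rightarrow> 'b \<Rightarrow> 'b) \<Rightarrow> (('b::real_normed_algebra \<Rightarrow> complex) \<Rightarrow> complex) \<Rightarrow> ('b \<Rightarrow> complex) \<Rightarrow> ('b \<Rightarrow> complex)" where
  "fun_left sc q \<mu> = (\<lambda>x. arens sc (emb sc x) q \<mu>)"

definition fun_both :: "(complex \<Rightarrow> 'b \<Rightarrow> 'b) \<Rightarrow> (('b::real_normed_algebra \<Rightarrow> complex) \<Rightarrow> complex) \<Rightarrow> ('b \<Rightarrow> complex) \<Rightarrow> ('b \<Rightarrow> complex)" where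
  "fun_both sc q \<mu> = (\<lambda>x. arens sc (arens sc q (emb sc x)) q \<mu>)"

end

theory Submission
  imports Defs
begin


locale scl =
  fixes sc :: "complex \<Rightarrow> 'b::{real_normed_algebra_1, banach} \<Rightarrow> 'b"
  assumes sc_real: "\<And>r x. sc (complex_of_real r) x = scaleR r x"
    and sc_mL: "\<And>a x y. sc a (x * y) = sc a x * y"
    and sc_mR: "\<And>a x y. sc a (x * y) = x * sc a y"
begin

lemma dualD:
  assumes "\<phi> \<in> dual sc"
  shows "\<phi> (x + y) = \<phi> x + \<phi> y" "\<phi> (sc a x) = a * \<phi> x"
  using assms unfolding dual_def by auto

lemma dualI:
  assumes "\<And>x y. \<phi> (x + y) = \<phi> x + \<phi> y" "\<And>a x. \<phi> (sc a x) = a * \<phi> x"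
    "\<And>x. cmod (\<phi> x) \<le> K * norm x"
  shows "\<phi> \<in> dual sc"
  using assms unfolding dual_def by auto

lemma dual_zero: assumes "\<phi> \<in> dual sc" shows "\<phi> 0 = 0"
  using dualD(1)[OF assms, of 0 0] by simp

lemma dual_scaleR: assumes "\<phi> \<in> dual sc" shows "\<phi> (scaleR r x) = of_real r * \<phi> x"
  using dualD(2)[OF assms, of "complex_of_real r" x] sc_real by simp

lemma dnorm_bound:
  assumes "\<phi> \<in> dual sc"
  shows "cmod (\<phi> x) \<le> dnorm \<phi> * norm x"
proof -
  obtain K where K: "\<forall>x. cmod (\<phi> x) \<le> K * norm x" using assms unfolding dual_def by auto
  have bdd: "bdd_above ((\<lambda>x. cmod (\<phi> x)) ` {x. norm x \<le> 1})"
  proof (rule bdd_aboveI2)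
    fix x :: 'b assume "x \<in> {x. norm x \<le> 1}"
    hence "norm x \<le> 1" by simp
    have "cmod (\<phi> x) \<le> K * norm x" using K by blast
    also have "\<dots> \<le> max K 0" using \<open>norm x \<le> 1\<close>
      by (smt (verit) mult_left_le norm_ge_zero mult_nonneg_nonneg mult_nonpos_nonneg)
    finally show "cmod (\<phi> x) \<le> max K 0" .
  qed
  show ?thesis
  proof (cases "x = 0")
    case True thus ?thesis using dual_zero[OF assms] by simp
  next
    case False
    define u where "u = scaleR (1 / norm x) x"
    have "norm u = 1" using False by (simp add: u_def)
    hence "cmod (\<phi> u) \<le> dnorm \<phi>" unfolding dnorm_def
      by (intro cSUP_upper[OF _ bdd]) simp
    moreover have "\<phi> u = of_real (1 / norm x) * \<phi> x" using dual_scaleR[OF assms] u_def by simp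
    ultimately have "cmod (\<phi> x) / norm x \<le> dnorm \<phi>" by (simp add: norm_divide)
    thus ?thesis using False by (simp add: divide_le_eq mult.commute)
  qed
qed

lemma dnorm_nonneg: assumes "\<phi> \<in> dual sc" shows "0 \<le> dnorm \<phi>"
proof -
  have "cmod (\<phi> 1) \<le> dnorm \<phi> * norm (1::'b)" by (rule dnorm_bound[OF assms])
  hence "cmod (\<phi> 1) \<le> dnorm \<phi>" by simp
  thus ?thesis using norm_ge_zero[of "\<phi> 1"] by linarith
qed

lemma dnorm_le:
  fixes \<psi> :: "'b \<Rightarrow> complex"
  assumes "\<And>x. cmod (\<psi> x) \<le> C * norm x" "0 \<le> C"
  shows "dnorm \<psi> \<le> C"
  unfolding dnorm_def
proof (rule cSUP_least)
  show "{x::'b. norm x \<le> 1} \<noteq> {}" proof -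
    have "(0::'b) \<in> {x. norm x \<le> 1}" by simp
    thus ?thesis by blast
  qed
  fix x :: 'b assume "x \<in> {x. norm x \<le> 1}"
  hence "norm x \<le> 1" by simp
  have "cmod (\<psi> x) \<le> C * norm x" by (rule assms)
  also have "\<dots> \<le> C" using \<open>norm x \<le> 1\<close> assms(2) by (simp add: mult_left_le)
  finally show "cmod (\<psi> x) \<le> C" .
qed

lemma lmul_dual: assumes "\<phi> \<in> dual sc" shows "(\<lambda>b. \<phi> (a * b)) \<in> dual sc"
proof (rule dualI)
  show "\<phi> (a * (x + y)) = \<phi> (a * x) + \<phi> (a * y)" for x y
    by (simp add: distrib_left dualD[OF assms])
  show "\<phi> (a * sc c x) = c * \<phi> (a * x)" for c x
    by (simp add: sc_mR[symmetric] dualD[OF assms])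
  show "cmod (\<phi> (a * x)) \<le> (dnorm \<phi> * norm a) * norm x" for x
  proof -
    have "cmod (\<phi> (a * x)) \<le> dnorm \<phi> * norm (a * x)" by (rule dnorm_bound[OF assms])
    also have "\<dots> \<le> dnorm \<phi> * (norm a * norm x)"
      by (intro mult_left_mono norm_mult_ineq dnorm_nonneg[OF assms])
    finally show ?thesis by (simp add: mult.assoc)
  qed
qed

lemma rmul_dual: assumes "\<phi> \<in> dual sc" shows "(\<lambda>b. \<phi> (b * a)) \<in> dual sc"
proof (rule dualI)
  show "\<phi> ((x + y) * a) = \<phi> (x * a) + \<phi> (y * a)" for x y
    by (simp add: distrib_right dualD[OF assms])
  show "\<phi> (sc c x * a) = c * \<phi> (x * a)" for c x
    by (simp add: sc_mL[symmetric] dualD[OF assms])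
  show "cmod (\<phi> (x * a)) \<le> (dnorm \<phi> * norm a) * norm x" for x
  proof -
    have "cmod (\<phi> (x * a)) \<le> dnorm \<phi> * norm (x * a)" by (rule dnorm_bound[OF assms])
    also have "\<dots> \<le> dnorm \<phi> * (norm x * norm a)"
      by (intro mult_left_mono norm_mult_ineq dnorm_nonneg[OF assms])
    finally show ?thesis by (simp add: mult_ac)
  qed
qed

lemma bidualD:
  assumes "n \<in> bidual sc" "\<phi> \<in> dual sc" "\<psi> \<in> dual sc"
  shows "n (\<lambda>x. \<phi> x + \<psi> x) = n \<phi> + n \<psi>" "n (\<lambda>x. c * \<phi> x) = c * n \<phi>"
  using assms unfolding bidual_def by auto

lemma bidual_bound:
  assumes "n \<in> bidual sc"
  obtains K where "K \<ge> 0" "\<And>\<phi>. \<phi> \<in> dual sc \<Longrightarrow> cmod (n \<phi>) \<le> K * dnorm \<phi>"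
proof -
  obtain K where K: "\<forall>\<phi>\<in>dual sc. cmod (n \<phi>) \<le> K * dnorm \<phi>" using assms unfolding bidual_def by auto
  show ?thesis
  proof (rule that[of "max K 0"])
    fix \<phi> assume "\<phi> \<in> dual sc"
    hence "cmod (n \<phi>) \<le> K * dnorm \<phi>" using K by blast
    also have "\<dots> \<le> max K 0 * dnorm \<phi>" using dnorm_nonneg[OF \<open>\<phi> \<in> dual sc\<close>]
      by (intro mult_right_mono) auto
    finally show "cmod (n \<phi>) \<le> max K 0 * dnorm \<phi>" .
  qed simp
qed

lemma L3: assumes "n \<in> bidual sc" "\<phi> \<in> dual sc"
  shows "(\<lambda>a. n (\<lambda>b. \<phi> (a * b))) \<in> dual sc"
proof -
  obtain K where K: "K \<ge> 0" "\<And>\<phi>. \<phi> \<in> dual sc \<Longrightarrow> cmod (n \<phi>) \<le> K * dnorm \<phi>"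
    using bidual_bound[OF assms(1)] by blast
  show ?thesis
  proof (rule dualI)
    fix x y
    have "(\<lambda>b. \<phi> ((x + y) * b)) = (\<lambda>b. (\<lambda>b. \<phi> (x * b)) b + (\<lambda>b. \<phi> (y * b)) b)"
      by (simp add: distrib_right dualD[OF assms(2)])
    thus "n (\<lambda>b. \<phi> ((x + y) * b)) = n (\<lambda>b. \<phi> (x * b)) + n (\<lambda>b. \<phi> (y * b))"
      using bidualD(1)[OF assms(1) lmul_dual[OF assms(2)] lmul_dual[OF assms(2)]] by simp
  next
    fix c x
    have "(\<lambda>b. \<phi> (sc c x * b)) = (\<lambda>b. c * (\<lambda>b. \<phi> (x * b)) b)"
      by (simp add: sc_mL[symmetric] dualD[OF assms(2)])
    thus "n (\<lambda>b. \<phi> (sc c x * b)) = c * n (\<lambda>b. \<phi> (x * b))"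
      using bidualD(2)[OF assms(1) lmul_dual[OF assms(2)] lmul_dual[OF assms(2)]] by simp
  next
    fix x
    have d: "dnorm (\<lambda>b. \<phi> (x * b)) \<le> dnorm \<phi> * norm x"
    proof (rule dnorm_le)
      fix b
      have "cmod (\<phi> (x * b)) \<le> dnorm \<phi> * norm (x * b)" by (rule dnorm_bound[OF assms(2)])
      also have "\<dots> \<le> dnorm \<phi> * (norm x * norm b)"
        by (intro mult_left_mono norm_mult_ineq dnorm_nonneg[OF assms(2)])
      finally show "cmod (\<phi> (x * b)) \<le> dnorm \<phi> * norm x * norm b" by (simp add: mult.assoc)
    qed (simp add: dnorm_nonneg[OF assms(2)])
    have "cmod (n (\<lambda>b. \<phi> (x * b))) \<le> K * dnorm (\<lambda>b. \<phi> (x * b))"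
      by (rule K(2)[OF lmul_dual[OF assms(2)]])
    also have "\<dots> \<le> K * (dnorm \<phi> * norm x)" using d K(1) by (rule mult_left_mono)
    finally show "cmod (n (\<lambda>b. \<phi> (x * b))) \<le> (K * dnorm \<phi>) * norm x" by (simp add: mult.assoc)
  qed
qed

lemma L4: assumes "n \<in> bidual sc" "\<phi> \<in> dual sc"
  shows "(\<lambda>x. n (\<lambda>a. \<phi> (a * x))) \<in> dual sc"
proof -
  obtain K where K: "K \<ge> 0" "\<And>\<phi>. \<phi> \<in> dual sc \<Longrightarrow> cmod (n \<phi>) \<le> K * dnorm \<phi>"
    using bidual_bound[OF assms(1)] by blast
  show ?thesis
  proof (rule dualI)
    fix x y
    have "(\<lambda>b. \<phi> (b * (x + y))) = (\<lambda>b. (\<lambda>b. \<phi> (b * x)) b + (\<lambda>b. \<phi> (b * y)) b)"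
      by (simp add: distrib_left dualD[OF assms(2)])
    thus "n (\<lambda>b. \<phi> (b * (x + y))) = n (\<lambda>b. \<phi> (b * x)) + n (\<lambda>b. \<phi> (b * y))"
      using bidualD(1)[OF assms(1) rmul_dual[OF assms(2)] rmul_dual[OF assms(2)]] by simp
  next
    fix c x
    have "(\<lambda>b. \<phi> (b * sc c x)) = (\<lambda>b. c * (\<lambda>b. \<phi> (b * x)) b)"
      by (simp add: sc_mR[symmetric] dualD[OF assms(2)])
    thus "n (\<lambda>b. \<phi> (b * sc c x)) = c * n (\<lambda>b. \<phi> (b * x))"
      using bidualD(2)[OF assms(1) rmul_dual[OF assms(2)] rmul_dual[OF assms(2)]] by simp
  next
    fix x
    have d: "dnorm (\<lambda>b. \<phi> (b * x)) \<le> dnorm \<phi> * norm x"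
    proof (rule dnorm_le)
      fix b
      have "cmod (\<phi> (b * x)) \<le> dnorm \<phi> * norm (b * x)" by (rule dnorm_bound[OF assms(2)])
      also have "\<dots> \<le> dnorm \<phi> * (norm b * norm x)"
        by (intro mult_left_mono norm_mult_ineq dnorm_nonneg[OF assms(2)])
      finally show "cmod (\<phi> (b * x)) \<le> dnorm \<phi> * norm x * norm b" by (simp add: mult_ac)
    qed (simp add: dnorm_nonneg[OF assms(2)])
    have "cmod (n (\<lambda>b. \<phi> (b * x))) \<le> K * dnorm (\<lambda>b. \<phi> (b * x))"
      by (rule K(2)[OF rmul_dual[OF assms(2)]])
    also have "\<dots> \<le> K * (dnorm \<phi> * norm x)" using d K(1) by (rule mult_left_mono)
    finally show "cmod (n (\<lambda>b. \<phi> (b * x))) \<le> (K * dnorm \<phi>) * norm x" by (simp add: mult.assoc)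
  qed
qed


lemma dual_add: assumes "\<phi> \<in> dual sc" "\<psi> \<in> dual sc" shows "(\<lambda>x. \<phi> x + \<psi> x) \<in> dual sc"
proof (rule dualI)
  show "\<phi> (x + y) + \<psi> (x + y) = \<phi> x + \<psi> x + (\<phi> y + \<psi> y)" for x y
    by (simp add: dualD[OF assms(1)] dualD[OF assms(2)])
  show "\<phi> (sc a x) + \<psi> (sc a x) = a * (\<phi> x + \<psi> x)" for a x
    by (simp add: dualD[OF assms(1)] dualD[OF assms(2)] distrib_left)
  show "cmod (\<phi> x + \<psi> x) \<le> (dnorm \<phi> + dnorm \<psi>) * norm x" for x
    using norm_triangle_ineq[of "\<phi> x" "\<psi> x"] dnorm_bound[OF assms(1), of x] dnorm_bound[OF assms(2), of x]
    by (simp add: distrib_right)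
qed

lemma dual_smul: assumes "\<phi> \<in> dual sc" shows "(\<lambda>x. c * \<phi> x) \<in> dual sc"
proof (rule dualI)
  show "c * \<phi> (x + y) = c * \<phi> x + c * \<phi> y" for x y
    by (simp add: dualD[OF assms(1)] distrib_left)
  show "c * \<phi> (sc a x) = a * (c * \<phi> x)" for a x
    by (simp add: dualD[OF assms(1)])
  show "cmod (c * \<phi> x) \<le> (cmod c * dnorm \<phi>) * norm x" for x
    using dnorm_bound[OF assms(1), of x] by (simp add: norm_mult mult.assoc mult_left_mono)
qed

lemma dual_const0: "(\<lambda>x. 0) \<in> dual sc"
  by (rule dualI[where K=0]) auto

lemma dual_sum:
  assumes "n \<in> bidual sc" "finite F" "F \<subseteq> dual sc"
  shows "(\<lambda>x. \<Sum>\<phi>\<in>F. c \<phi> * \<phi> x) \<in> dual sc \<and> n (\<lambda>x. \<Sum>\<phi>\<in>F. c \<phi> * \<phi> x) = (\<Sum>\<phi>\<in>F. c \<phi> * n \<phi>)"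
  using assms(2,3)
proof (induction F rule: finite_induct)
  case empty
  have "n (\<lambda>x. 0 * (\<lambda>x. 0) x) = 0 * n (\<lambda>x. 0)"
    by (rule bidualD(2)[OF assms(1) dual_const0 dual_const0])
  then show ?case using dual_const0 by simp
next
  case (insert \<phi>0 F)
  hence IH: "(\<lambda>x. \<Sum>\<phi>\<in>F. c \<phi> * \<phi> x) \<in> dual sc" "n (\<lambda>x. \<Sum>\<phi>\<in>F. c \<phi> * \<phi> x) = (\<Sum>\<phi>\<in>F. c \<phi> * n \<phi>)"
    and p0: "\<phi>0 \<in> dual sc" by auto
  have eq: "(\<lambda>x. \<Sum>\<phi>\<in>insert \<phi>0 F. c \<phi> * \<phi> x) = (\<lambda>x. (\<lambda>x. c \<phi>0 * \<phi>0 x) x + (\<lambda>x. \<Sum>\<phi>\<in>F. c \<phi> * \<phi> x) x)"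
    using insert.hyps by simp
  have d1: "(\<lambda>x. c \<phi>0 * \<phi>0 x) \<in> dual sc" by (rule dual_smul[OF p0])
  show ?case unfolding eq
    using dual_add[OF d1 IH(1)] bidualD(1)[OF assms(1) d1 IH(1)] bidualD(2)[OF assms(1) p0 p0] IH(2) insert.hyps
    by simp
qed

lemma linalg:
  assumes Aadd: "\<forall>x\<in>A. \<forall>y\<in>A. x + y \<in> A" and Asc: "\<forall>c. \<forall>x\<in>A. sc c x \<in> A"
    and "finite F" "F \<subseteq> dual sc"
  shows "\<psi> \<in> dual sc \<Longrightarrow> (\<forall>a\<in>A. (\<forall>\<phi>\<in>F. \<phi> a = 0) \<longrightarrow> \<psi> a = 0) \<Longrightarrow>
      \<exists>c. \<forall>a\<in>A. \<psi> a = (\<Sum>\<phi>\<in>F. c \<phi> * \<phi> a)"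
  using assms(3,4)
proof (induction F arbitrary: \<psi> rule: finite_induct)
  case empty thus ?case by simp
next
  case (insert \<phi>0 F)
  have p0: "\<phi>0 \<in> dual sc" using insert by auto
  have FD: "F \<subseteq> dual sc" using insert by auto
  show ?case
  proof (cases "\<exists>k\<in>A. (\<forall>\<phi>\<in>F. \<phi> k = 0) \<and> \<phi>0 k \<noteq> 0")
    case False
    have "\<forall>a\<in>A. (\<forall>\<phi>\<in>F. \<phi> a = 0) \<longrightarrow> \<psi> a = 0" using False insert.prems by auto
    then obtain c where c: "\<forall>a\<in>A. \<psi> a = (\<Sum>\<phi>\<in>F. c \<phi> * \<phi> a)" using insert.IH[OF insert.prems(1) _ FD] by blast
    show ?thesis
    proof (intro exI[of _ "c(\<phi>0 := 0)"] ballI)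
      fix a assume "a \<in> A"
      have "(\<Sum>\<phi>\<in>F. (c(\<phi>0 := 0)) \<phi> * \<phi> a) = (\<Sum>\<phi>\<in>F. c \<phi> * \<phi> a)"
        using insert.hyps by (intro sum.cong) auto
      thus "\<psi> a = (\<Sum>\<phi>\<in>insert \<phi>0 F. (c(\<phi>0 := 0)) \<phi> * \<phi> a)" using c \<open>a \<in> A\<close> insert.hyps by simp
    qed
  next
    case True
    then obtain k where k: "k \<in> A" "\<forall>\<phi>\<in>F. \<phi> k = 0" "\<phi>0 k \<noteq> 0" by blast
    define t where "t = \<psi> k / \<phi>0 k"
    define \<psi>' where "\<psi>' = (\<lambda>x. \<psi> x + (- t) * \<phi>0 x)"
    have d': "\<psi>' \<in> dual sc" unfolding \<psi>'_def by (intro dual_add dual_smul insert.prems p0)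
    have van: "\<forall>a\<in>A. (\<forall>\<phi>\<in>F. \<phi> a = 0) \<longrightarrow> \<psi>' a = 0"
    proof (intro ballI impI)
      fix a assume a: "a \<in> A" "\<forall>\<phi>\<in>F. \<phi> a = 0"
      define r where "r = - (\<phi>0 a / \<phi>0 k)"
      define a' where "a' = a + sc r k"
      have "a' \<in> A" unfolding a'_def using Aadd Asc a k by blast
      have z: "\<phi> a' = \<phi> a + r * \<phi> k" if "\<phi> \<in> dual sc" for \<phi>
        unfolding a'_def by (simp add: dualD[OF that])
      have "\<forall>\<phi>\<in>insert \<phi>0 F. \<phi> a' = 0"
      proof
        fix \<phi> assume "\<phi> \<in> insert \<phi>0 F"
        thus "\<phi> a' = 0"
        proof
          assume "\<phi> = \<phi>0" thus ?thesis using z[OF p0] k(3) by (simp add: r_def)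
        next
          assume "\<phi> \<in> F" hence "\<phi> \<in> dual sc" using FD by auto
          thus ?thesis using z[of \<phi>] \<open>\<phi> \<in> F\<close> a k by auto
        qed
      qed
      hence "\<psi> a' = 0" using insert.prems(2) \<open>a' \<in> A\<close> by blast
      hence "\<psi> a + r * \<psi> k = 0" using z[OF insert.prems(1)] by simp
      hence "\<psi> a = \<phi>0 a * t" unfolding r_def t_def by (simp add: field_simps)
      thus "\<psi>' a = 0" unfolding \<psi>'_def by simp
    qed
    obtain c where c: "\<forall>a\<in>A. \<psi>' a = (\<Sum>\<phi>\<in>F. c \<phi> * \<phi> a)" using insert.IH[OF d' van FD] by blast
    show ?thesis
    proof (intro exI[of _ "c(\<phi>0 := t)"] ballI)
      fix a assume "a \<in> A"
      have "(\<Sum>\<phi>\<in>F. (c(\<phi>0 := t)) \<phi> * \<phi> a) = (\<Sum>\<phi>\<in>F. c \<phi> * \<phi> a)"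
        using insert.hyps by (intro sum.cong) auto
      moreover have "\<psi> a = \<psi>' a + t * \<phi>0 a" unfolding \<psi>'_def by simp
      ultimately show "\<psi> a = (\<Sum>\<phi>\<in>insert \<phi>0 F. (c(\<phi>0 := t)) \<phi> * \<phi> a)"
        using c \<open>a \<in> A\<close> insert.hyps by simp
    qed
  qed
qed

lemma interp:
  assumes Aadd: "\<forall>x\<in>A. \<forall>y\<in>A. x + y \<in> A" and Asc: "\<forall>c. \<forall>x\<in>A. sc c x \<in> A" and "1 \<in> A"
    and q: "q \<in> bidual sc" "\<forall>\<phi>\<in>annihilator sc A. q \<phi> = 0"
    and "finite F" "F \<subseteq> dual sc"
  shows "\<exists>a\<in>A. \<forall>\<phi>\<in>F. \<phi> a = q \<phi>"
  using assms(6,7)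
proof (induction F rule: finite_induct)
  case empty thus ?case using \<open>1 \<in> A\<close> by blast
next
  case (insert \<psi> F)
  have p: "\<psi> \<in> dual sc" and FD: "F \<subseteq> dual sc" using insert by auto
  obtain a0 where a0: "a0 \<in> A" "\<forall>\<phi>\<in>F. \<phi> a0 = q \<phi>" using insert.IH[OF FD] by blast
  show ?case
  proof (cases "\<exists>k\<in>A. (\<forall>\<phi>\<in>F. \<phi> k = 0) \<and> \<psi> k \<noteq> 0")
    case True
    then obtain k where k: "k \<in> A" "\<forall>\<phi>\<in>F. \<phi> k = 0" "\<psi> k \<noteq> 0" by blast
    define r where "r = (q \<psi> - \<psi> a0) / \<psi> k"
    define a where "a = a0 + sc r k"
    have "a \<in> A" unfolding a_def using Aadd Asc a0 k by blast
    have z: "\<phi> a = \<phi> a0 + r * \<phi> k" if "\<phi> \<in> dual sc" for \<phi>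
      unfolding a_def by (simp add: dualD[OF that])
    show ?thesis
    proof (intro bexI[OF _ \<open>a \<in> A\<close>] ballI)
      fix \<phi> assume "\<phi> \<in> insert \<psi> F"
      thus "\<phi> a = q \<phi>"
      proof
        assume "\<phi> = \<psi>" thus ?thesis using z[OF p] k(3) by (simp add: r_def)
      next
        assume "\<phi> \<in> F" hence "\<phi> \<in> dual sc" using FD by auto
        thus ?thesis using z[of \<phi>] \<open>\<phi> \<in> F\<close> a0 k by auto
      qed
    qed
  next
    case False
    have "\<forall>a\<in>A. (\<forall>\<phi>\<in>F. \<phi> a = 0) \<longrightarrow> \<psi> a = 0" using False by auto
    then obtain c where c: "\<forall>a\<in>A. \<psi> a = (\<Sum>\<phi>\<in>F. c \<phi> * \<phi> a)"
      using linalg[OF Aadd Asc insert.hyps(1) FD p] by blast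
    define S where "S = (\<lambda>x. \<Sum>\<phi>\<in>F. c \<phi> * \<phi> x)"
    have S: "S \<in> dual sc" "q S = (\<Sum>\<phi>\<in>F. c \<phi> * q \<phi>)"
      using dual_sum[OF q(1) insert.hyps(1) FD] unfolding S_def by auto
    define ch where "ch = (\<lambda>x. \<psi> x + (-1) * S x)"
    have dchi: "ch \<in> dual sc" unfolding ch_def by (intro dual_add dual_smul p S(1))
    have "ch \<in> annihilator sc A" unfolding annihilator_def using dchi c by (simp add: ch_def S_def)
    hence "q ch = 0" using q(2) by blast
    have "(\<lambda>x. ch x + S x) = \<psi>" unfolding ch_def by auto
    hence "q \<psi> = q ch + q S" using bidualD(1)[OF q(1) dchi S(1)] by simp
    hence "q \<psi> = (\<Sum>\<phi>\<in>F. c \<phi> * q \<phi>)" using \<open>q ch = 0\<close> S(2) by simp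
    moreover have "\<psi> a0 = (\<Sum>\<phi>\<in>F. c \<phi> * q \<phi>)" using c a0 by simp
    ultimately show ?thesis using a0 by (intro bexI[OF _ a0(1)]) auto
  qed
qed


lemma emb_dual: "\<phi> \<in> dual sc \<Longrightarrow> emb sc x \<phi> = \<phi> x"
  by (simp add: emb_def)

lemma C1: assumes "\<mu> \<in> dual sc" shows "arens sc q (emb sc a) \<mu> = q (\<lambda>b. \<mu> (b * a))"
proof -
  have "(\<lambda>b. emb sc a (\<lambda>c. \<mu> (b * c))) = (\<lambda>b. \<mu> (b * a))"
    using emb_dual[OF lmul_dual[OF assms]] by auto
  thus ?thesis using assms unfolding arens_def by simp
qed

lemma C2: assumes "\<mu> \<in> dual sc" "q \<in> bidual sc"
  shows "arens sc (emb sc a) q \<mu> = q (\<lambda>c. \<mu> (a * c))"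
  using assms L3[OF assms(2,1)] unfolding arens_def by (simp add: emb_dual)

lemma C3: assumes "\<mu> \<in> dual sc" "q \<in> bidual sc"
  shows "arens sc (arens sc q (emb sc a)) q \<mu> = q (\<lambda>b. (\<lambda>b. q (\<lambda>c. \<mu> (b * c))) (b * a))"
proof -
  have "arens sc (arens sc q (emb sc a)) q \<mu> = arens sc q (emb sc a) (\<lambda>b. q (\<lambda>c. \<mu> (b * c)))"
    using assms unfolding arens_def[of sc "arens sc q (emb sc a)"] by simp
  also have "\<dots> = q (\<lambda>b. (\<lambda>b. q (\<lambda>c. \<mu> (b * c))) (b * a))"
    by (rule C1[OF L3[OF assms(2,1)]])
  finally show ?thesis .
qed

lemma Cproj: assumes "\<mu> \<in> dual sc"
  shows "arens sc q q \<mu> = q (\<lambda>b. q (\<lambda>c. \<mu> (b * c)))"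
  using assms unfolding arens_def by simp

lemma preann_iff:
  "annihilator sc A \<subseteq> preannihilator sc (f ` A) \<longleftrightarrow> (\<forall>\<mu>\<in>annihilator sc A. \<forall>a\<in>A. f a \<mu> = 0)"
  unfolding annihilator_def preannihilator_def by auto

lemma main:
  assumes sub: "unital_closed_subalgebra sc A" and qb: "q \<in> bidual sc" and qq: "arens sc q q = q"
  shows "(q \<in> weak_star_closure sc (emb sc ` A) \<longleftrightarrow> q \<in> biannihilator sc A)
     \<and> (q \<in> weak_star_closure sc (emb sc ` A) \<longleftrightarrow>
           annihilator sc A \<subseteq> preannihilator sc ((\<lambda>a. arens sc q (emb sc a)) ` A))
     \<and> (q \<in> weak_star_closure sc (emb sc ` A) \<longleftrightarrow>
           annihilator sc A \<subseteq> preannihilator sc ((\<lambda>a. arens sc (emb sc a) q) ` A))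
     \<and> (q \<in> weak_star_closure sc (emb sc ` A) \<longleftrightarrow>
           annihilator sc A \<subseteq> preannihilator sc ((\<lambda>a. arens sc (arens sc q (emb sc a)) q) ` A))
     \<and> (q \<in> weak_star_closure sc (emb sc ` A) \<longleftrightarrow>
           (\<forall>\<mu>\<in>annihilator sc A. fun_right sc \<mu> q \<in> annihilator sc A))
     \<and> (q \<in> weak_star_closure sc (emb sc ` A) \<longleftrightarrow>
           (\<forall>\<mu>\<in>annihilator sc A. fun_left sc q \<mu> \<in> annihilator sc A))
     \<and> (q \<in> weak_star_closure sc (emb sc ` A) \<longleftrightarrow>
           (\<forall>\<mu>\<in>annihilator sc A. fun_both sc q \<mu> \<in> annihilator sc A))"
proof -
  have Aadd: "\<forall>x\<in>A. \<forall>y\<in>A. x + y \<in> A" and Amul: "\<forall>x\<in>A. \<forall>y\<in>A. x * y \<in> A"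
    and Asc: "\<forall>c. \<forall>x\<in>A. sc c x \<in> A" and A1: "1 \<in> A"
    using sub unfolding unital_closed_subalgebra_def by auto
  define P2 where "P2 = (\<forall>\<mu>\<in>annihilator sc A. q \<mu> = 0)"
  have annD: "\<mu> \<in> dual sc" "a \<in> A \<Longrightarrow> \<mu> a = 0" if "\<mu> \<in> annihilator sc A" for \<mu> a
    using that unfolding annihilator_def by auto
  have rann: "(\<lambda>b. \<mu> (b * a)) \<in> annihilator sc A" if "\<mu> \<in> annihilator sc A" "a \<in> A" for \<mu> a
    using rmul_dual[OF annD(1)[OF that(1)]] annD(2)[OF that(1)] Amul that(2)
    unfolding annihilator_def by auto
  have lann: "(\<lambda>b. \<mu> (a * b)) \<in> annihilator sc A" if "\<mu> \<in> annihilator sc A" "a \<in> A" for \<mu> a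
    using lmul_dual[OF annD(1)[OF that(1)]] annD(2)[OF that(1)] Amul that(2)
    unfolding annihilator_def by auto
  have nuann: "(\<lambda>b. q (\<lambda>c. \<mu> (b * c))) \<in> annihilator sc A" if "P2" "\<mu> \<in> annihilator sc A" for \<mu>
    using L3[OF qb annD(1)[OF that(2)]] lann[OF that(2)] that(1)
    unfolding annihilator_def P2_def by auto
  have projq: "q (\<lambda>b. q (\<lambda>c. \<mu> (b * c))) = q \<mu>" if "\<mu> \<in> dual sc" for \<mu>
    using Cproj[OF that, of q] qq by simp
  have e12: "q \<in> weak_star_closure sc (emb sc ` A) \<longleftrightarrow> P2"
  proof
    assume cl: "q \<in> weak_star_closure sc (emb sc ` A)"
    show P2 unfolding P2_def
    proof
      fix \<phi> assume ph: "\<phi> \<in> annihilator sc A"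
      have "cmod (q \<phi>) < e" if "e > 0" for e
      proof -
        have "\<forall>F \<epsilon>. finite F \<and> F \<subseteq> dual sc \<and> \<epsilon> > 0 \<longrightarrow>
           (\<exists>s\<in>emb sc ` A. \<forall>\<phi>\<in>F. cmod (q \<phi> - s \<phi>) < \<epsilon>)"
          using cl unfolding weak_star_closure_def by blast
        hence "\<exists>s\<in>emb sc ` A. \<forall>\<psi>\<in>{\<phi>}. cmod (q \<psi> - s \<psi>) < e"
          using that annD(1)[OF ph] by blast
        then obtain s where "s \<in> emb sc ` A" "cmod (q \<phi> - s \<phi>) < e" by blast
        then obtain a where "a \<in> A" "cmod (q \<phi> - emb sc a \<phi>) < e" by blast
        thus ?thesis using emb_dual[OF annD(1)[OF ph]] annD(2)[OF ph] by simp
      qed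
      thus "q \<phi> = 0" by (metis less_irrefl zero_less_norm_iff)
    qed
  next
    assume P2
    show "q \<in> weak_star_closure sc (emb sc ` A)" unfolding weak_star_closure_def
    proof (intro CollectI conjI qb allI impI)
      fix F :: "('b \<Rightarrow> complex) set" and e :: real
      assume h: "finite F \<and> F \<subseteq> dual sc \<and> 0 < e"
      obtain a where a: "a \<in> A" "\<forall>\<phi>\<in>F. \<phi> a = q \<phi>"
        using interp[OF Aadd Asc A1 qb _ _ ] \<open>P2\<close> h unfolding P2_def by blast
      show "\<exists>s\<in>emb sc ` A. \<forall>\<phi>\<in>F. cmod (q \<phi> - s \<phi>) < e"
      proof (intro bexI[of _ "emb sc a"] ballI)
        fix \<phi> assume "\<phi> \<in> F"
        thus "cmod (q \<phi> - emb sc a \<phi>) < e" using a h emb_dual[of \<phi> a] by auto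
      qed (use a in auto)
    qed
  qed
  have e2: "q \<in> biannihilator sc A \<longleftrightarrow> P2"
    using qb unfolding biannihilator_def P2_def by auto
  have e3: "annihilator sc A \<subseteq> preannihilator sc ((\<lambda>a. arens sc q (emb sc a)) ` A) \<longleftrightarrow> P2"
    unfolding preann_iff
  proof
    assume h: "\<forall>\<mu>\<in>annihilator sc A. \<forall>a\<in>A. arens sc q (emb sc a) \<mu> = 0"
    show P2 unfolding P2_def
    proof
      fix \<mu> assume m: "\<mu> \<in> annihilator sc A"
      show "q \<mu> = 0" using h m A1 C1[OF annD(1)[OF m], of q 1] by simp
    qed
  next
    assume P2
    thus "\<forall>\<mu>\<in>annihilator sc A. \<forall>a\<in>A. arens sc q (emb sc a) \<mu> = 0"
      using C1 annD rann unfolding P2_def by simp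
  qed
  have e3': "annihilator sc A \<subseteq> preannihilator sc ((\<lambda>a. arens sc (emb sc a) q) ` A) \<longleftrightarrow> P2"
    unfolding preann_iff
  proof
    assume h: "\<forall>\<mu>\<in>annihilator sc A. \<forall>a\<in>A. arens sc (emb sc a) q \<mu> = 0"
    show P2 unfolding P2_def
    proof
      fix \<mu> assume m: "\<mu> \<in> annihilator sc A"
      show "q \<mu> = 0" using h m A1 C2[OF annD(1)[OF m] qb, of 1] by simp
    qed
  next
    assume P2
    show "\<forall>\<mu>\<in>annihilator sc A. \<forall>a\<in>A. arens sc (emb sc a) q \<mu> = 0"
    proof (intro ballI)
      fix \<mu> a assume m: "\<mu> \<in> annihilator sc A" and a: "a \<in> A"
      show "arens sc (emb sc a) q \<mu> = 0"
        using C2[OF annD(1)[OF m] qb, of a] annD(2)[OF nuann[OF \<open>P2\<close> m] a] by simp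
    qed
  qed
  have e4: "annihilator sc A \<subseteq> preannihilator sc ((\<lambda>a. arens sc (arens sc q (emb sc a)) q) ` A) \<longleftrightarrow> P2"
    unfolding preann_iff
  proof
    assume h: "\<forall>\<mu>\<in>annihilator sc A. \<forall>a\<in>A. arens sc (arens sc q (emb sc a)) q \<mu> = 0"
    show P2 unfolding P2_def
    proof
      fix \<mu> assume m: "\<mu> \<in> annihilator sc A"
      show "q \<mu> = 0" using h m A1 C3[OF annD(1)[OF m] qb, of 1] projq[OF annD(1)[OF m]] by simp
    qed
  next
    assume P2
    show "\<forall>\<mu>\<in>annihilator sc A. \<forall>a\<in>A. arens sc (arens sc q (emb sc a)) q \<mu> = 0"
    proof (intro ballI)
      fix \<mu> a assume m: "\<mu> \<in> annihilator sc A" and a: "a \<in> A"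
      have "q (\<lambda>b. (\<lambda>b. q (\<lambda>c. \<mu> (b * c))) (b * a)) = 0"
        using rann[OF nuann[OF \<open>P2\<close> m] a] \<open>P2\<close> unfolding P2_def by blast
      thus "arens sc (arens sc q (emb sc a)) q \<mu> = 0"
        using C3[OF annD(1)[OF m] qb, of a] by simp
    qed
  qed
  have fr: "fun_right sc \<mu> q = (\<lambda>x. q (\<lambda>b. \<mu> (b * x)))" if "\<mu> \<in> dual sc" for \<mu>
    unfolding fun_right_def using C1[OF that] by simp
  have fl: "fun_left sc q \<mu> = (\<lambda>x. q (\<lambda>c. \<mu> (x * c)))" if "\<mu> \<in> dual sc" for \<mu>
    unfolding fun_left_def using C2[OF that qb] by simp
  have fb: "fun_both sc q \<mu> = (\<lambda>x. q (\<lambda>b. (\<lambda>b. q (\<lambda>c. \<mu> (b * c))) (b * x)))" if "\<mu> \<in> dual sc" for \<mu>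
    unfolding fun_both_def using C3[OF that qb] by simp
  have e5: "(\<forall>\<mu>\<in>annihilator sc A. fun_right sc \<mu> q \<in> annihilator sc A) \<longleftrightarrow> P2"
  proof
    assume h: "\<forall>\<mu>\<in>annihilator sc A. fun_right sc \<mu> q \<in> annihilator sc A"
    show P2 unfolding P2_def
    proof
      fix \<mu> assume m: "\<mu> \<in> annihilator sc A"
      show "q \<mu> = 0" using annD(2)[OF bspec[OF h m] A1] fr[OF annD(1)[OF m]] by simp
    qed
  next
    assume P2
    show "\<forall>\<mu>\<in>annihilator sc A. fun_right sc \<mu> q \<in> annihilator sc A"
    proof
      fix \<mu> assume m: "\<mu> \<in> annihilator sc A"
      show "fun_right sc \<mu> q \<in> annihilator sc A"
        unfolding fr[OF annD(1)[OF m]] annihilator_def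
        using L4[OF qb annD(1)[OF m]] rann[OF m] \<open>P2\<close> unfolding P2_def by auto
    qed
  qed
  have e5': "(\<forall>\<mu>\<in>annihilator sc A. fun_left sc q \<mu> \<in> annihilator sc A) \<longleftrightarrow> P2"
  proof
    assume h: "\<forall>\<mu>\<in>annihilator sc A. fun_left sc q \<mu> \<in> annihilator sc A"
    show P2 unfolding P2_def
    proof
      fix \<mu> assume m: "\<mu> \<in> annihilator sc A"
      show "q \<mu> = 0" using annD(2)[OF bspec[OF h m] A1] fl[OF annD(1)[OF m]] by simp
    qed
  next
    assume P2
    show "\<forall>\<mu>\<in>annihilator sc A. fun_left sc q \<mu> \<in> annihilator sc A"
      using fl annD nuann[OF \<open>P2\<close>] by simp
  qed
  have e6: "(\<forall>\<mu>\<in>annihilator sc A. fun_both sc q \<mu> \<in> annihilator sc A) \<longleftrightarrow> P2"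
  proof
    assume h: "\<forall>\<mu>\<in>annihilator sc A. fun_both sc q \<mu> \<in> annihilator sc A"
    show P2 unfolding P2_def
    proof
      fix \<mu> assume m: "\<mu> \<in> annihilator sc A"
      show "q \<mu> = 0" using annD(2)[OF bspec[OF h m] A1] fb[OF annD(1)[OF m]] projq[OF annD(1)[OF m]] by simp
    qed
  next
    assume P2
    show "\<forall>\<mu>\<in>annihilator sc A. fun_both sc q \<mu> \<in> annihilator sc A"
    proof
      fix \<mu> assume m: "\<mu> \<in> annihilator sc A"
      have nu: "(\<lambda>b. q (\<lambda>c. \<mu> (b * c))) \<in> annihilator sc A" by (rule nuann[OF \<open>P2\<close> m])
      show "fun_both sc q \<mu> \<in> annihilator sc A"
        unfolding fb[OF annD(1)[OF m]] annihilator_def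
        using L4[OF qb annD(1)[OF nu]] rann[OF nu] \<open>P2\<close> unfolding P2_def by auto
    qed
  qed
  show ?thesis using e12 e2 e3 e3' e4 e5 e5' e6 by blast
qed

end

theorem lemma2p1:
  fixes sc :: "complex \<Rightarrow> 'b::{real_normed_algebra_1, banach} \<Rightarrow> 'b"
    and st :: "'b \<Rightarrow> 'b"
    and A :: "'b set"
    and q :: "('b \<Rightarrow> complex) \<Rightarrow> complex"
  assumes "cstar_algebra sc st"
    and "unital_closed_subalgebra sc A"
    and "bidual_projection sc st q"
  shows "(q \<in> weak_star_closure sc (emb sc ` A) \<longleftrightarrow> q \<in> biannihilator sc A)
     \<and> (q \<in> weak_star_closure sc (emb sc ` A) \<longleftrightarrow>
           annihilator sc A \<subseteq> preannihilator sc ((\<lambda>a. arens sc q (emb sc a)) ` A))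
     \<and> (q \<in> weak_star_closure sc (emb sc ` A) \<longleftrightarrow>
           annihilator sc A \<subseteq> preannihilator sc ((\<lambda>a. arens sc (emb sc a) q) ` A))
     \<and> (q \<in> weak_star_closure sc (emb sc ` A) \<longleftrightarrow>
           annihilator sc A \<subseteq> preannihilator sc ((\<lambda>a. arens sc (arens sc q (emb sc a)) q) ` A))
     \<and> (q \<in> weak_star_closure sc (emb sc ` A) \<longleftrightarrow>
           (\<forall>\<mu>\<in>annihilator sc A. fun_right sc \<mu> q \<in> annihilator sc A))
     \<and> (q \<in> weak_star_closure sc (emb sc ` A) \<longleftrightarrow>
           (\<forall>\<mu>\<in>annihilator sc A. fun_left sc q \<mu> \<in> annihilator sc A))
     \<and> (q \<in> weak_star_closure sc (emb sc ` A) \<longleftrightarrow>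
           (\<forall>\<mu>\<in>annihilator sc A. fun_both sc q \<mu> \<in> annihilator sc A))"
proof -
  interpret scl sc
  proof
    show "sc (complex_of_real r) x = r *\<^sub>R x" for r x using assms(1) unfolding cstar_algebra_def by meson
    show "sc a (x * y) = sc a x * y" for a x y using assms(1) unfolding cstar_algebra_def by meson
    show "sc a (x * y) = x * sc a y" for a x y using assms(1) unfolding cstar_algebra_def by meson
  qed
  show ?thesis
    using main[OF assms(2)] assms(3) unfolding bidual_projection_def by blast
qed

end
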